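(* Let $\mathcal A\subseteq E^\infty$, let $V\subseteq E$ be a block subspace, $\vec v$ a finite block sequence and $T$ a $(V,\vec v)$-rule. Then there is a block subspace $X\subseteq V$ such that for every $\vec x\in T$: if there exists a block subspace $Y\subseteq X$ such that player I has a strategy in $B^T_Y(\vec x)$ to play in $\mathcal A$, then for every block subspace $Y\subseteq X$, player I has a strategy in $B^T_Y(\vec x)$ to play in $\mathcal A$.
   Context: Fix a countable field $\mathfrak F$ and let $E$ be the countable-dimensional $\mathfrak F$-vector space with basis $(e_n)$. For non-zero $x=\sum a_ne_n$, ${\rm supp}\,x=\{n:a_n\neq0\}$. A block sequence is a sequence of non-zero vectors with $\max{\rm supp}\,x_n<\min{\rm supp}\,x_{n+1}$. "Subspace" means an infinite-dimensional block subspace of $E$. For a subspace $X$, $X[k]=\{x\in X\setminus\{0\}:k<\min{\rm supp}\,x\}$. $E^\infty=E^{\mathbb N}$ with the product of discrete topologies; $E^{<\infty}$ is the set of finite block sequences; $\hat{}$ is concatenation; $T_{\vec x}=\{\vec y:\vec x\,\hat{}\,\vec y\in T\}$. Game $B_V(\vec v)$: if $|\vec v|$ is even: II plays a subspace $Z_0\subseteq V$; I plays non-zero $x_0\in Z_0$ and $n_0\in\mathbb N$; II plays non-zero $y_0\in V[n_0]$ and a subspace $Z_1\subseteq V$; I plays $x_1\in Z_1$, $n_1$; II plays $y_1\in V[n_1]$, $Z_2$; etc.; outcome $\vec v\,\hat{}\,(x_0,y_0,x_1,y_1,\dots)$. If $|\vec v|$ is odd: I plays $n_0$; II plays $y_0\in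 V[n_0]$ and $Z_0\subseteq V$; I plays $x_0\in Z_0$ and $n_1$; II plays $y_1\in V[n_1]$ and $Z_1$; etc.; outcome $\vec v\,\hat{}\,(y_0,x_0,y_1,x_1,\dots)$. A $(V,\vec v)$-rule is a set $T\subseteq E^{<\infty}$ with $\vec v\in T$ such that: (i) if $\vec y\in T$, $|\vec y|$ odd, then for every subspace $Z\subseteq V$ there is $z\in Z$ with $\vec y\,\hat{}\,z\in T$; (ii) if $\vec y\in T$, $|\vec y|$ even, then there is $n$ with $\vec y\,\hat{}\,z\in T$ for all $z\in V[n]$. The $T$-induced subgame $B^T_V(\vec v)$ is played as $B_V(\vec v)$ with the additional requirement that every position, i.e. the finite sequence of vectors played so far listed in the order they appear in the outcome, belongs to $T_{\vec v}$. A strategy to play in $\mathcal A$ is one all of whose outcomes lie in $\mathcal A$. *)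

theory Defs
  imports Main "HOL-Library.Countable" "HOL-Library.Function_Algebras"
begin

text \<open>Vectors of E are finitely supported functions nat => F (coordinates w.r.t. the
basis (e_n)). Sequences in E^infinity are functions nat => vector.\<close>

type_synonym 'f vec = "nat \<Rightarrow> 'f"

definition supp :: "('f::zero) vec \<Rightarrow> nat set" where
  "supp x = {n. x n \<noteq> 0}"

definition in_E :: "('f::zero) vec \<Rightarrow> bool" where
  "in_E x \<longleftrightarrow> finite (supp x)"

definition block_seq :: "(nat \<Rightarrow> ('f::zero) vec) \<Rightarrow> bool" where
  "block_seq b \<longleftrightarrow> (\<forall>n. in_E (b n) \<and> b n \<noteq> 0 \<and>
                          Max (supp (b n)) < Min (supp (b (Suc n))))"

definition fin_block :: "('f::zero) vec list \<Rightarrow> bool" where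
  "fin_block xs \<longleftrightarrow> (\<forall>x\<in>set xs. in_E x \<and> x \<noteq> 0) \<and>
     (\<forall>i. Suc i < length xs \<longrightarrow> Max (supp (xs ! i)) < Min (supp (xs ! Suc i)))"

definition seq_span :: "(nat \<Rightarrow> ('f::comm_ring_1) vec) \<Rightarrow> 'f vec set" where
  "seq_span b = {x. \<exists>n c. x = (\<lambda>k. \<Sum>i<n. c i * b i k)}"

definition block_subspace :: "('f::comm_ring_1) vec set \<Rightarrow> bool" where
  "block_subspace X \<longleftrightarrow> (\<exists>b. block_seq b \<and> X = seq_span b)"

definition tail_sp :: "('f::zero) vec set \<Rightarrow> nat \<Rightarrow> 'f vec set" where
  "tail_sp X k = {x\<in>X. x \<noteq> 0 \<and> k < Min (supp x)}"

definition is_rule :: "('f::comm_ring_1) vec set \<Rightarrow> 'f vec list \<Rightarrow> 'f vec list set \<Rightarrow> bool" where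
  "is_rule V v T \<longleftrightarrow> T \<subseteq> {xs. fin_block xs} \<and> v \<in> T \<and>
     (\<forall>y\<in>T. odd (length y) \<longrightarrow>
        (\<forall>Z. block_subspace Z \<and> Z \<subseteq> V \<longrightarrow> (\<exists>z\<in>Z. y @ [z] \<in> T))) \<and>
     (\<forall>y\<in>T. even (length y) \<longrightarrow> (\<exists>n. \<forall>z\<in>tail_sp V n. y @ [z] \<in> T))"

text \<open>A strategy for I is a map sigma from the list of II's moves so far
to I's next move (x, n) (in the odd case I's first move only uses n).  A move of II is a
pair (y, Z) (in the even case II's first move only uses Z).  tau ranges over all
infinite sequences of II-moves.\<close>

definition I_move :: "'f vec list \<Rightarrow> (('f vec \<times> 'f vec set) list \<Rightarrow> 'f vec \<times> nat)
    \<Rightarrow> (nat \<Rightarrow> 'f vec \<times> 'f vec set) \<Rightarrow> nat \<Rightarrow> 'f vec \<times> nat" where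
  "I_move v \<sigma> \<tau> k = \<sigma> (map \<tau> [0..<(if even (length v) then Suc k else k)])"

text \<open>Outcome: v followed by x0,y0,x1,y1,... (even case) or y0,x0,y1,x1,... (odd case).\<close>
definition outcome :: "'f vec list \<Rightarrow> (('f vec \<times> 'f vec set) list \<Rightarrow> 'f vec \<times> nat)
    \<Rightarrow> (nat \<Rightarrow> 'f vec \<times> 'f vec set) \<Rightarrow> nat \<Rightarrow> 'f vec" where
  "outcome v \<sigma> \<tau> j =
     (if j < length v then v ! j
      else (let i = j - length v; k = i div 2 in
        if even (length v)
        then (if even i then fst (I_move v \<sigma> \<tau> k) else fst (\<tau> (Suc k)))
        else (if even i then fst (\<tau> k) else fst (I_move v \<sigma> \<tau> (Suc k)))))"

definition position :: "'f vec list \<Rightarrow> (('f vec \<times> 'f vec set) list \<Rightarrow> 'f vec \<times> nat)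
    \<Rightarrow> (nat \<Rightarrow> 'f vec \<times> 'f vec set) \<Rightarrow> nat \<Rightarrow> 'f vec list" where
  "position v \<sigma> \<tau> m = map (outcome v \<sigma> \<tau>) [0..<m]"

definition II_legal :: "('f::comm_ring_1) vec list set \<Rightarrow> 'f vec set \<Rightarrow> 'f vec list
    \<Rightarrow> (('f vec \<times> 'f vec set) list \<Rightarrow> 'f vec \<times> nat)
    \<Rightarrow> (nat \<Rightarrow> 'f vec \<times> 'f vec set) \<Rightarrow> nat \<Rightarrow> bool" where
  "II_legal T W v \<sigma> \<tau> k \<longleftrightarrow>
     block_subspace (snd (\<tau> k)) \<and> snd (\<tau> k) \<subseteq> W \<and>
     (if even (length v)
      then (0 < k \<longrightarrow> fst (\<tau> k) \<in> tail_sp W (snd (I_move v \<sigma> \<tau> (k - 1))) \<and>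
                        position v \<sigma> \<tau> (length v + 2 * k) \<in> T)
      else (fst (\<tau> k) \<in> tail_sp W (snd (I_move v \<sigma> \<tau> k)) \<and>
            position v \<sigma> \<tau> (length v + 2 * k + 1) \<in> T))"

definition I_legal :: "('f::comm_ring_1) vec list set \<Rightarrow> 'f vec list
    \<Rightarrow> (('f vec \<times> 'f vec set) list \<Rightarrow> 'f vec \<times> nat)
    \<Rightarrow> (nat \<Rightarrow> 'f vec \<times> 'f vec set) \<Rightarrow> nat \<Rightarrow> bool" where
  "I_legal T v \<sigma> \<tau> k \<longleftrightarrow>
     (if even (length v)
      then fst (I_move v \<sigma> \<tau> k) \<in> snd (\<tau> k) \<and> fst (I_move v \<sigma> \<tau> k) \<noteq> 0 \<and>
           position v \<sigma> \<tau> (length v + 2 * k + 1) \<in> T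
      else (0 < k \<longrightarrow> fst (I_move v \<sigma> \<tau> k) \<in> snd (\<tau> (k - 1)) \<and>
                      fst (I_move v \<sigma> \<tau> k) \<noteq> 0 \<and>
                      position v \<sigma> \<tau> (length v + 2 * k) \<in> T))"

text \<open>Player I has a strategy in B^T_W(v) to play in A: a strategy sigma such that against
every sequence of II-moves, I's moves are legal as long as II's previous moves were legal,
and every play in which all of II's moves are legal has outcome in A.  (Positions lie in
T_v iff v followed by them lies in T, which is what is checked.)\<close>
definition I_has_strategy :: "('f::comm_ring_1) vec list set \<Rightarrow> 'f vec set \<Rightarrow> 'f vec list
    \<Rightarrow> (nat \<Rightarrow> 'f vec) set \<Rightarrow> bool" where
  "I_has_strategy T W v A \<longleftrightarrow>
     (\<exists>\<sigma>. \<forall>\<tau>.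
        (\<forall>k. (\<forall>j < (if even (length v) then Suc k else k). II_legal T W v \<sigma> \<tau> j)
              \<longrightarrow> I_legal T v \<sigma> \<tau> k) \<and>
        ((\<forall>k. II_legal T W v \<sigma> \<tau> k) \<longrightarrow> outcome v \<sigma> \<tau> \<in> A))"

end

theory Submission
  imports Defs "HOL-Library.Countable_Set"
begin

lemma supp_ne: "x \<noteq> 0 \<Longrightarrow> supp x \<noteq> {}"
  by (auto simp: supp_def)

lemma bs_basic: "block_seq b \<Longrightarrow> finite (supp (b n)) \<and> supp (b n) \<noteq> {} \<and> Max (supp (b n)) < Min (supp (b (Suc n)))"
  unfolding block_seq_def in_E_def using supp_ne by blast

lemma bs_minmax: "block_seq b \<Longrightarrow> Min (supp (b n)) \<le> Max (supp (b n))"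
  using bs_basic[of b n] by (simp add: Min_le_iff)

lemma bs_lt: "block_seq b \<Longrightarrow> j < j' \<Longrightarrow> Max (supp (b j)) < Min (supp (b j'))"
proof (induction j')
  case 0 then show ?case by simp
next
  case (Suc j')
  then show ?case using bs_basic[of b j'] bs_minmax[of b j']
    by (metis le_less_trans less_Suc_eq order_less_trans)
qed

lemma bs_min: "block_seq b \<Longrightarrow> n \<le> Min (supp (b n))"
proof (induction n)
  case 0 then show ?case by simp
next
  case (Suc n)
  then show ?case using bs_basic[of b n] bs_minmax[of b n] by linarith
qed

lemma bs_shift: "block_seq b \<Longrightarrow> block_seq (\<lambda>j. b (j+m))"
  unfolding block_seq_def by simp

lemma bs_zero_below: "block_seq b \<Longrightarrow> k < Min (supp (b j)) \<Longrightarrow> b j k = 0"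
  using bs_basic[of b j] Min_le by (fastforce simp: supp_def)

lemma bs_zero_above: "block_seq b \<Longrightarrow> Max (supp (b j)) < k \<Longrightarrow> b j k = 0"
  using bs_basic[of b j] Max_ge by (fastforce simp: supp_def)

lemma sum_pad: "(\<Sum>i<(N::nat). (if i < n then f i else 0)) = (\<Sum>i<min N n. f i)"
  by (induction N) (auto simp: min_def)

lemma span_zero: "(\<lambda>k. 0) \<in> seq_span b"
  unfolding seq_span_def by (rule CollectI, rule exI[of _ 0]) simp

lemma span_gen: "b j \<in> seq_span (b :: nat \<Rightarrow> ('f::comm_ring_1) vec)"
  unfolding seq_span_def
proof (rule CollectI, intro exI)
  show "b j = (\<lambda>k. \<Sum>i<Suc j. (if i = j then 1 else 0) * b i k)"
    by (simp add: if_distrib)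
qed

lemma span_add: assumes "x \<in> seq_span b" "y \<in> seq_span b"
  shows "(\<lambda>k. x k + y k) \<in> seq_span b"
proof -
  obtain n c where x: "x = (\<lambda>k. \<Sum>i<n. c i * b i k)" using assms(1) unfolding seq_span_def by blast
  obtain m d where y: "y = (\<lambda>k. \<Sum>i<m. d i * b i k)" using assms(2) unfolding seq_span_def by blast
  have "(\<lambda>k. x k + y k) = (\<lambda>k. \<Sum>i<n+m. ((if i < n then c i else 0) + (if i < m then d i else 0)) * b i k)"
  proof
    fix k
    have "(\<Sum>i<n+m. ((if i < n then c i else 0) + (if i < m then d i else 0)) * b i k)
       = (\<Sum>i<n+m. (if i < n then c i * b i k else 0)) + (\<Sum>i<n+m. (if i < m then d i * b i k else 0))"
      unfolding sum.distrib[symmetric] by (rule sum.cong) (auto simp: distrib_right)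
    also have "\<dots> = x k + y k" unfolding sum_pad x y by (simp add: min_def)
    finally show "x k + y k = (\<Sum>i<n+m. ((if i < n then c i else 0) + (if i < m then d i else 0)) * b i k)" by simp
  qed
  then show ?thesis unfolding seq_span_def mem_Collect_eq
    by (intro exI[of _ "n+m"] exI[of _ "\<lambda>i. (if i < n then c i else 0) + (if i < m then d i else 0)"])
qed

lemma span_smult: assumes "x \<in> seq_span b" shows "(\<lambda>k. a * x k) \<in> seq_span b"
proof -
  obtain n c where x: "x = (\<lambda>k. \<Sum>i<n. c i * b i k)" using assms(1) unfolding seq_span_def by blast
  have "(\<lambda>k. a * x k) = (\<lambda>k. \<Sum>i<n. (a * c i) * b i k)"
    unfolding x by (simp add: sum_distrib_left mult.assoc)
  then show ?thesis unfolding seq_span_def mem_Collect_eq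
    by (intro exI[of _ n] exI[of _ "\<lambda>i. a * c i"])
qed

lemma span_mono: assumes "\<And>j. c j \<in> seq_span d" shows "seq_span c \<subseteq> seq_span d"
proof
  fix x assume "x \<in> seq_span c"
  then obtain n a where x: "x = (\<lambda>k. \<Sum>i<n. a i * c i k)" unfolding seq_span_def by blast
  have "(\<lambda>k. \<Sum>i<n. a i * c i k) \<in> seq_span d"
  proof (induction n)
    case 0 then show ?case using span_zero by simp
  next
    case (Suc n)
    have "(\<lambda>k. (\<Sum>i<n. a i * c i k) + a n * c n k) \<in> seq_span d"
      using span_add[OF Suc span_smult[OF assms]] .
    then show ?case by simp
  qed
  then show "x \<in> seq_span d" using x by simp
qed

lemma span_fin: assumes "block_seq b" "x \<in> seq_span b" shows "finite (supp x)"
proof -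
  obtain n c where x: "x = (\<lambda>k. \<Sum>i<n. c i * b i k)" using assms(2) unfolding seq_span_def by blast
  have "supp x \<subseteq> (\<Union>i<n. supp (b i))"
  proof
    fix k assume "k \<in> supp x"
    then have "(\<Sum>i<n. c i * b i k) \<noteq> 0" by (simp add: supp_def x)
    then obtain i where "i < n" "c i * b i k \<noteq> 0" by (meson lessThan_iff sum.neutral)
    then have "b i k \<noteq> 0" by auto
    then show "k \<in> (\<Union>i<n. supp (b i))" using \<open>i < n\<close> by (auto simp: supp_def)
  qed
  then show ?thesis using bs_basic[OF assms(1)] by (meson finite_UN_I finite_lessThan finite_subset)
qed


lemma span_sum: assumes "\<And>j. j < (n::nat) \<Longrightarrow> f j \<in> seq_span d"
  shows "(\<lambda>k. \<Sum>j<n. f j k) \<in> seq_span d"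
  using assms
proof (induction n)
  case 0 then show ?case using span_zero by simp
next
  case (Suc n)
  have "(\<lambda>k. (\<Sum>j<n. f j k) + f n k) \<in> seq_span d"
  proof -
    have "(\<lambda>k. \<Sum>j<n. f j k) \<in> seq_span d" using Suc by simp
    from span_add[OF this Suc.prems[of n]] show ?thesis by simp
  qed
  then show ?case by simp
qed

lemma span_tail:
  assumes b: "block_seq b" and x: "x \<in> seq_span b" and i: "0 < i"
    and z: "\<And>k. k \<le> Max (supp (b (i-1))) \<Longrightarrow> x k = 0"
  shows "x \<in> seq_span (\<lambda>j. b (j+i))"
proof -
  obtain n c where xd: "x = (\<lambda>k. \<Sum>j<n. c j * b j k)" using x unfolding seq_span_def by blast
  define M where "M = Max (supp (b (i-1)))"
  have eq: "x = (\<lambda>k. \<Sum>j<n. (\<lambda>k. if j < i then 0 else c j * b j k) k)"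
  proof
    fix k
    show "x k = (\<Sum>j<n. (\<lambda>k. if j < i then 0 else c j * b j k) k)"
    proof (cases "k \<le> M")
      case True
      have "b j k = 0" if "i \<le> j" for j
      proof -
        have "Max (supp (b (i-1))) < Min (supp (b j))" using bs_lt[OF b, of "i-1" j] that i by simp
        then show ?thesis using bs_zero_below[OF b] True M_def by simp
      qed
      then have "(\<Sum>j<n. (\<lambda>k. if j < i then 0 else c j * b j k) k) = 0"
        by (intro sum.neutral) auto
      then show ?thesis using z True M_def by simp
    next
      case False
      have "b j k = 0" if "j < i" for j
      proof -
        have "Max (supp (b j)) \<le> M"
        proof (cases "j = i - 1")
          case True then show ?thesis by (simp add: M_def)
        next
          case False
          then have "j < i - 1" using that by simp
          then show ?thesis using bs_lt[OF b, of j "i-1"] bs_minmax[OF b, of "i-1"] M_def by simp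
        qed
        then show ?thesis using bs_zero_above[OF b] \<open>\<not> k \<le> M\<close> by simp
      qed
      then show ?thesis unfolding xd by (intro sum.cong) auto
    qed
  qed
  have "(\<lambda>k. \<Sum>j<n. (\<lambda>k. if j < i then 0 else c j * b j k) k) \<in> seq_span (\<lambda>j. b (j+i))"
  proof (rule span_sum)
    fix j
    show "(\<lambda>k. if j < i then 0 else c j * b j k) \<in> seq_span (\<lambda>j. b (j+i))"
    proof (cases "j < i")
      case True then show ?thesis using span_zero by simp
    next
      case False
      have "(\<lambda>j. b (j+i)) (j - i) \<in> seq_span (\<lambda>j. b (j+i))" by (rule span_gen)
      then have "b j \<in> seq_span (\<lambda>j. b (j+i))" using False by simp
      then show ?thesis using span_smult[of "b j" _ "c j"] False by simp
    qed
  qed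
  then show ?thesis using eq by simp
qed

lemma transfer:
  fixes W W' :: "('f::comm_ring_1) vec set"
  assumes win: "I_has_strategy T W' v A" and tail: "tail_sp W N \<subseteq> W'"
    and sub: "\<And>Z. block_subspace Z \<Longrightarrow> Z \<subseteq> W \<Longrightarrow> \<exists>Z'. block_subspace Z' \<and> Z' \<subseteq> Z \<and> Z' \<subseteq> W'"
  shows "I_has_strategy T W v A"
proof -
  obtain \<sigma>' where \<sigma>': "\<forall>\<tau>. (\<forall>k. (\<forall>j<(if even (length v) then Suc k else k). II_legal T W' v \<sigma>' \<tau> j) \<longrightarrow> I_legal T v \<sigma>' \<tau> k) \<and> ((\<forall>k. II_legal T W' v \<sigma>' \<tau> k) \<longrightarrow> outcome v \<sigma>' \<tau> \<in> A)"
    using win unfolding I_has_strategy_def by blast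
  define g where "g Z = (if block_subspace Z \<and> Z \<subseteq> W then (SOME Z'. block_subspace Z' \<and> Z' \<subseteq> Z \<and> Z' \<subseteq> W') else Z)" for Z
  have g2: "block_subspace (g Z) \<and> g Z \<subseteq> Z \<and> g Z \<subseteq> W'" if "block_subspace Z" "Z \<subseteq> W" for Z
    using someI_ex[OF sub[OF that]] that unfolding g_def by simp
  have g1: "g Z \<subseteq> Z" for Z
    using g2[of Z] unfolding g_def by (cases "block_subspace Z \<and> Z \<subseteq> W") auto
  have tl: "tail_sp W (max n N) \<subseteq> tail_sp W' n" for n
    using tail unfolding tail_sp_def by auto
  define h where "h = (\<lambda>p::('f vec \<times> 'f vec set). (fst p, g (snd p)))"
  define \<sigma> where "\<sigma> l = (fst (\<sigma>' (map h l)), max (snd (\<sigma>' (map h l))) N)" for l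
  show ?thesis unfolding I_has_strategy_def
  proof (intro exI[of _ \<sigma>] allI)
    fix \<tau> :: "nat \<Rightarrow> 'f vec \<times> 'f vec set"
    define \<tau>' where "\<tau>' = h \<circ> \<tau>"
    have im: "I_move v \<sigma> \<tau> k = (fst (I_move v \<sigma>' \<tau>' k), max (snd (I_move v \<sigma>' \<tau>' k)) N)" for k
      unfolding I_move_def \<sigma>_def \<tau>'_def by simp
    have fim: "fst (I_move v \<sigma> \<tau> k) = fst (I_move v \<sigma>' \<tau>' k)" for k using im by simp
    have sim: "snd (I_move v \<sigma> \<tau> k) = max (snd (I_move v \<sigma>' \<tau>' k)) N" for k using im by simp
    have ft: "fst (\<tau>' k) = fst (\<tau> k)" "snd (\<tau>' k) = g (snd (\<tau> k))" for k
      unfolding \<tau>'_def h_def by simp_all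
    have oc: "outcome v \<sigma> \<tau> = outcome v \<sigma>' \<tau>'"
      unfolding outcome_def by (intro ext) (simp add: fim ft Let_def)
    have pos: "position v \<sigma> \<tau> m = position v \<sigma>' \<tau>' m" for m unfolding position_def oc ..
    have IIl: "II_legal T W' v \<sigma>' \<tau>' k" if "II_legal T W v \<sigma> \<tau> k" for k
      using that g2[of "snd (\<tau> k)"] unfolding II_legal_def pos ft sim by auto (use tl in blast)+
    have Il: "I_legal T v \<sigma> \<tau> k" if "I_legal T v \<sigma>' \<tau>' k" for k
      using that g1 unfolding I_legal_def pos fim ft by (auto split: if_splits)
    from \<sigma>'[rule_format, of \<tau>'] IIl Il oc
    show "(\<forall>k. (\<forall>j<(if even (length v) then Suc k else k). II_legal T W v \<sigma> \<tau> j) \<longrightarrow> I_legal T v \<sigma> \<tau> k) \<and>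
        ((\<forall>k. II_legal T W v \<sigma> \<tau> k) \<longrightarrow> outcome v \<sigma> \<tau> \<in> A)"
      by metis
  qed
qed

lemma mono_win:
  assumes "I_has_strategy T W' v A" "W \<subseteq> W'"
  shows "I_has_strategy T W v A"
  by (rule transfer[OF assms(1), of W 0]) (use assms(2) in \<open>auto simp: tail_sp_def\<close>)


lemma countable_inE: "countable {x :: ('f::{zero,countable}) vec. in_E x}"
proof -
  define dec where "dec l = (\<lambda>k. if k < length l then l ! k else (0::'f))" for l
  have "{x :: 'f vec. in_E x} \<subseteq> range dec"
  proof
    fix x :: "'f vec" assume "x \<in> {x. in_E x}"
    then have fin: "finite (supp x)" by (simp add: in_E_def)
    define L where "L = Suc (Max (supp x))"
    have "x = dec (map x [0..<L])"
    proof
      fix k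
      show "x k = dec (map x [0..<L]) k"
      proof (cases "k < L")
        case True then show ?thesis by (simp add: dec_def)
      next
        case False
        have "k \<notin> supp x"
        proof
          assume "k \<in> supp x"
          then have "k \<le> Max (supp x)" using Max_ge[OF fin] by blast
          then show False using False L_def by simp
        qed
        then show ?thesis using False by (simp add: dec_def supp_def)
      qed
    qed
    then show "x \<in> range dec" by blast
  qed
  then show ?thesis by (rule countable_subset) simp
qed

lemma countable_rule: "T \<subseteq> {xs. fin_block xs} \<Longrightarrow> countable (T :: ('f::{zero,countable}) vec list set)"
proof -
  assume "T \<subseteq> {xs. fin_block xs}"
  then have "T \<subseteq> lists {x. in_E x}" by (auto simp: fin_block_def)
  then show ?thesis using countable_lists[OF countable_inE] countable_subset by blast
qed

definition good :: "('f::comm_ring_1) vec list set \<Rightarrow> (nat \<Rightarrow> 'f vec) set \<Rightarrow> 'f vec set \<Rightarrow> 'f vec list \<Rightarrow> (nat \<Rightarrow> 'f vec) \<Rightarrow> bool" where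
  "good T A S x b \<longleftrightarrow> block_seq b \<and> seq_span b \<subseteq> S \<and> I_has_strategy T (seq_span b) x A"

primrec Bs :: "('f::comm_ring_1) vec list set \<Rightarrow> (nat \<Rightarrow> 'f vec) set \<Rightarrow> (nat \<Rightarrow> 'f vec list) \<Rightarrow> (nat \<Rightarrow> 'f vec) \<Rightarrow> nat \<Rightarrow> (nat \<Rightarrow> 'f vec)" where
  "Bs T A e b0 0 = b0"
| "Bs T A e b0 (Suc i) = (if \<exists>b. good T A (seq_span (Bs T A e b0 i)) (e i) b
     then (SOME b. good T A (seq_span (Bs T A e b0 i)) (e i) b) else Bs T A e b0 i)"

lemma Bs_props: "block_seq (Bs T A e b0 i) \<Longrightarrow> block_seq (Bs T A e b0 (Suc i)) \<and> seq_span (Bs T A e b0 (Suc i)) \<subseteq> seq_span (Bs T A e b0 i)"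
proof (cases "\<exists>b. good T A (seq_span (Bs T A e b0 i)) (e i) b")
  case True
  define bb where "bb = (SOME b. good T A (seq_span (Bs T A e b0 i)) (e i) b)"
  have g: "good T A (seq_span (Bs T A e b0 i)) (e i) bb" unfolding bb_def by (rule someI_ex[OF True])
  have "Bs T A e b0 (Suc i) = bb" using True bb_def by simp
  then show ?thesis using g unfolding good_def by simp
qed simp

lemma Bs_block: "block_seq b0 \<Longrightarrow> block_seq (Bs T A e b0 i)"
proof (induction i)
  case (Suc j) then show ?case using Bs_props[of T A e b0 j] by blast
qed simp

lemma Bs_mono: "block_seq b0 \<Longrightarrow> i \<le> j \<Longrightarrow> seq_span (Bs T A e b0 j) \<subseteq> seq_span (Bs T A e b0 i)"
proof (induction j)
  case 0 then show ?case by simp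
next
  case (Suc j)
  then show ?case using Bs_props[of T A e b0 j] Bs_block[of b0 T A e j] by (metis le_Suc_eq order_refl order_trans)
qed

lemma Bs_good: "good T A (seq_span (Bs T A e b0 i)) (e i) b \<Longrightarrow> I_has_strategy T (seq_span (Bs T A e b0 (Suc i))) (e i) A"
proof -
  assume g: "good T A (seq_span (Bs T A e b0 i)) (e i) b"
  then have ex: "\<exists>b. good T A (seq_span (Bs T A e b0 i)) (e i) b" by blast
  define bb where "bb = (SOME b. good T A (seq_span (Bs T A e b0 i)) (e i) b)"
  have g: "good T A (seq_span (Bs T A e b0 i)) (e i) bb" unfolding bb_def by (rule someI_ex[OF ex])
  have "Bs T A e b0 (Suc i) = bb" using ex bb_def by simp
  then show ?thesis using g unfolding good_def by simp
qed

primrec Ds :: "(nat \<Rightarrow> nat \<Rightarrow> ('f::zero) vec) \<Rightarrow> nat \<Rightarrow> 'f vec" where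
  "Ds B 0 = B 0 0"
| "Ds B (Suc i) = B (Suc i) (Suc (Max (supp (Ds B i))))"

lemma Ds_gen: "\<exists>k. Ds B i = B i k"
  by (cases i) auto

lemma Ds_block: assumes "\<And>i. block_seq (B i)" shows "block_seq (Ds B)"
  unfolding block_seq_def
proof
  fix n
  obtain k where k: "Ds B n = B n k" using Ds_gen by blast
  have "Suc (Max (supp (Ds B n))) \<le> Min (supp (Ds B (Suc n)))"
    using bs_min[OF assms[of "Suc n"]] by simp
  then show "in_E (Ds B n) \<and> Ds B n \<noteq> 0 \<and> Max (supp (Ds B n)) < Min (supp (Ds B (Suc n)))"
    using assms[of n] k unfolding block_seq_def by simp
qed

lemma sub_lemma:
  assumes t: "tail_sp X N \<subseteq> seq_span c" and Z: "block_subspace Z" and ZX: "Z \<subseteq> X"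
  shows "\<exists>Z'. block_subspace Z' \<and> Z' \<subseteq> Z \<and> Z' \<subseteq> seq_span c"
proof -
  obtain z where z: "block_seq z" "Z = seq_span z" using Z unfolding block_subspace_def by blast
  define Z' where "Z' = seq_span (\<lambda>j. z (j + Suc N))"
  have "block_subspace Z'" unfolding Z'_def block_subspace_def using bs_shift[OF z(1)] by blast
  moreover have "Z' \<subseteq> Z" unfolding Z'_def z(2) by (rule span_mono) (rule span_gen)
  moreover have "Z' \<subseteq> seq_span c" unfolding Z'_def
  proof (rule span_mono)
    fix j
    have "z (j + Suc N) \<in> Z" unfolding z(2) by (rule span_gen)
    moreover have "z (j + Suc N) \<noteq> 0" using z(1) unfolding block_seq_def by blast
    moreover have "N < Min (supp (z (j + Suc N)))" using bs_min[OF z(1), of "j + Suc N"] by simp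
    ultimately have "z (j + Suc N) \<in> tail_sp X N" using ZX unfolding tail_sp_def by auto
    then show "z (j + Suc N) \<in> seq_span c" using t by blast
  qed
  ultimately show ?thesis by blast
qed

theorem mainTheorem5:
  fixes A :: "(nat \<Rightarrow> nat \<Rightarrow> 'f::{field,countable}) set"
    and V :: "'f vec set" and v :: "'f vec list" and T :: "'f vec list set"
  assumes "block_subspace V" and "fin_block v" and "is_rule V v T"
  shows "\<exists>X. block_subspace X \<and> X \<subseteq> V \<and>
    (\<forall>x\<in>T. (\<exists>Y. block_subspace Y \<and> Y \<subseteq> X \<and> I_has_strategy T Y x A) \<longrightarrow>
            (\<forall>Y. block_subspace Y \<and> Y \<subseteq> X \<longrightarrow> I_has_strategy T Y x A))"
proof -
  obtain b0 where b0: "block_seq b0" "V = seq_span b0" using assms(1) unfolding block_subspace_def by blast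
  have Tsub: "T \<subseteq> {xs. fin_block xs}" and vT: "v \<in> T" using assms(3) unfolding is_rule_def by auto
  have cT: "countable T" by (rule countable_rule[OF Tsub])
  define e where "e = from_nat_into T"
  define B where "B = Bs T A e b0"
  define d where "d = Ds B"
  define X where "X = seq_span d"
  have Bb: "block_seq (B i)" for i unfolding B_def by (rule Bs_block[OF b0(1)])
  have Bm: "i \<le> j \<Longrightarrow> seq_span (B j) \<subseteq> seq_span (B i)" for i j unfolding B_def by (rule Bs_mono[OF b0(1)])
  have db: "block_seq d" unfolding d_def by (rule Ds_block[OF Bb])
  have dB: "d j \<in> seq_span (B j)" for j
    using Ds_gen[of B j] span_gen unfolding d_def by metis
  have dBi: "i \<le> j \<Longrightarrow> d j \<in> seq_span (B i)" for i j using dB Bm by blast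
  have XV: "X \<subseteq> V" unfolding X_def b0(2) B_def[symmetric]
    using span_mono[of d "B 0"] dBi[of 0] by (simp add: B_def)
  have a: "\<exists>N. tail_sp X N \<subseteq> seq_span (B i)" for i
  proof (cases "i = 0")
    case True
    then show ?thesis using XV b0(2) unfolding tail_sp_def B_def by auto
  next
    case False
    define N where "N = Max (supp (d (i-1)))"
    have "tail_sp X N \<subseteq> seq_span (B i)"
    proof
      fix x assume x: "x \<in> tail_sp X N"
      then have xX: "x \<in> X" and x0: "x \<noteq> 0" and xN: "N < Min (supp x)" unfolding tail_sp_def by auto
      have fin: "finite (supp x)" using span_fin[OF db] xX X_def by simp
      have z: "x k = 0" if "k \<le> N" for k
      proof (rule ccontr)
        assume "x k \<noteq> 0"
        then have "k \<in> supp x" by (simp add: supp_def)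
        then have "Min (supp x) \<le> k" using Min_le[OF fin] by blast
        then show False using xN that by simp
      qed
      have "x \<in> seq_span (\<lambda>j. d (j+i))"
        by (rule span_tail[OF db]) (use xX X_def False z N_def in auto)
      moreover have "seq_span (\<lambda>j. d (j+i)) \<subseteq> seq_span (B i)"
        by (rule span_mono) (rule dBi, simp)
      ultimately show "x \<in> seq_span (B i)" by blast
    qed
    then show ?thesis by blast
  qed
  have bX: "block_subspace X" unfolding X_def block_subspace_def using db by blast
  show ?thesis
  proof (intro exI[of _ X] conjI bX XV ballI impI allI)
    fix x Y'
    assume xT: "x \<in> T"
      and ex: "\<exists>Y. block_subspace Y \<and> Y \<subseteq> X \<and> I_has_strategy T Y x A"
      and Y': "block_subspace Y' \<and> Y' \<subseteq> X"
    obtain i where ei: "e i = x" using from_nat_into_surj[OF cT xT] e_def by blast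
    obtain Y where Y: "block_subspace Y" "Y \<subseteq> X" "I_has_strategy T Y x A" using ex by blast
    obtain N where N: "tail_sp X N \<subseteq> seq_span (B i)" using a by blast
    obtain Z' where Z': "block_subspace Z'" "Z' \<subseteq> Y" "Z' \<subseteq> seq_span (B i)"
      using sub_lemma[OF N Y(1) Y(2)] by blast
    obtain b' where b': "block_seq b'" "Z' = seq_span b'" using Z'(1) unfolding block_subspace_def by blast
    have "I_has_strategy T Z' x A" by (rule mono_win[OF Y(3) Z'(2)])
    then have "good T A (seq_span (B i)) (e i) b'" unfolding good_def using b' Z'(3) ei by simp
    then have win: "I_has_strategy T (seq_span (B (Suc i))) x A"
      using Bs_good ei unfolding B_def by metis
    obtain N' where N': "tail_sp X N' \<subseteq> seq_span (B (Suc i))" using a by blast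
    show "I_has_strategy T Y' x A"
    proof (rule transfer[OF win, of Y' N'])
      show "tail_sp Y' N' \<subseteq> seq_span (B (Suc i))" using N' Y' unfolding tail_sp_def by auto
      fix Z assume "block_subspace Z" "Z \<subseteq> Y'"
      then show "\<exists>Z'. block_subspace Z' \<and> Z' \<subseteq> Z \<and> Z' \<subseteq> seq_span (B (Suc i))"
        using sub_lemma[OF N'] Y' by blast
    qed
  qed
qed

end
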